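(* Let $(\Omega,\mathcal E_\Omega)$ be a finite-dimensional generalized probabilistic theory whose state space $\Omega$ is transitive and whose positive cone $V_+$ is self-dual with respect to $\langle\cdot,\cdot\rangle_{GL(\Omega)}$. Let $F=\{f_a\}_{a\in A}$ and $G=\{g_b\}_{b\in B}$ be ideal observables on $\Omega$ with finite outcome sets $A,B$, and let $\widetilde M^{FG}=\{\widetilde m^{FG}_{ab}\}_{(a,b)\in A\times B}$ be an arbitrary observable on $A\times B$ with marginals $\widetilde M^F=\{\sum_b\widetilde m^{FG}_{ab}\}_a$, $\widetilde M^G=\{\sum_a\widetilde m^{FG}_{ab}\}_b$. Then there exists a state $\omega\in\Omega$ such that $$D_\infty(\widetilde M^F,F)+D_\infty(\widetilde M^G,G)\ge LE(\omega^F)+LE(\omega^G).$$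
   Context: Setting: $V=\mathbb R^{N+1}$ with Euclidean inner product $(\cdot,\cdot)_E$. A state space $\Omega\subset V$ is a compact convex set with $\mathrm{span}(\Omega)=V$ and $0\notin\mathrm{aff}(\Omega)$; $V_+=\{\lambda\omega:\lambda\ge0,\omega\in\Omega\}$; the unit effect $u\in V^*$ satisfies $u(\omega)=1$ on $\Omega$; effects are $\mathcal E_\Omega=\{e\in V^*:0\le e(\omega)\le1\ \forall\omega\in\Omega\}$. An observable with finite outcome set $X$ is a family of effects $\{e_x\}_{x\in X}$ with $\sum_xe_x=u$ (the trivial observable $\{u\}$ is excluded). An effect is pure if it is an extreme point of $\mathcal E_\Omega$; indecomposable if $e\ne0$ and $e=e_1+e_2$ with $e_1,e_2\in\mathcal E_\Omega$ forces $e_1,e_2$ to be scalar multiples of $e$. $F=\{f_a\}$ is ideal if each $f_a$ equals $\sum_{i\in I_a}e_i$ or $u-\sum_{i\in I_a}e_i$ for a finite family of pure indecomposable effects. $GL(\Omega)$: group of linear bijections $T$ of $V$ with $T(\Omega)=\Omega$, $\mu$ its normalized Haar measure, $\langle x,y\rangle_{GL(\Omega)}=\int(Tx,Ty)_E\,d\mu(T)$. $\Omega$ is transitive if $GL(\Omega)$ acts transitively on the extreme points of $\Omega$; $V_+$ is self-dual w.r.t. $\langle\cdot,\cdot\rangle_{GL(\Omega)}$ if $V_+=\{y:\langle x,y\rangle_{GL(\Omega)}\ge0\ \forall x\in V_+\}$. $\omega^F=\{f_a(\omega)\}_a$. Minimum localization error: $LE(\omega^F)=1-\max_{a\in A}f_a(\omega)$.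 $l_\infty$ distance: $D_\infty(\widetilde F,F)=\sup_{\omega\in\Omega}\max_{a\in A}|\widetilde f_a(\omega)-f_a(\omega)|$. *)

theory Defs
  imports "HOL-Analysis.Analysis"
begin

text \<open>V = real^'n (a finite index type of cardinality N+1). Dual vectors (elements of V^*)
  are identified with vectors via the Euclidean inner product: e(w) = e \<bullet> w.\<close>

definition state_space :: "(real^'n) set \<Rightarrow> bool" where
  "state_space \<Omega> \<longleftrightarrow> compact \<Omega> \<and> convex \<Omega> \<and> span \<Omega> = UNIV \<and> (0::real^'n) \<notin> affine hull \<Omega>"

definition pos_cone :: "(real^'n) set \<Rightarrow> (real^'n) set" where
  "pos_cone \<Omega> = {x. \<exists>c\<ge>0. \<exists>w\<in>\<Omega>. x = c *\<^sub>R w}"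

definition unit_effect :: "(real^'n) set \<Rightarrow> real^'n \<Rightarrow> bool" where
  "unit_effect \<Omega> u \<longleftrightarrow> (\<forall>w\<in>\<Omega>. u \<bullet> w = 1)"

definition effects :: "(real^'n) set \<Rightarrow> (real^'n) set" where
  "effects \<Omega> = {e. \<forall>w\<in>\<Omega>. 0 \<le> e \<bullet> w \<and> e \<bullet> w \<le> 1}"

text \<open>An observable with finite outcome set X (the trivial observable {u}, i.e. a single
  outcome, is excluded).\<close>
definition observable :: "(real^'n) set \<Rightarrow> real^'n \<Rightarrow> 'x set \<Rightarrow> ('x \<Rightarrow> real^'n) \<Rightarrow> bool" where
  "observable \<Omega> u X e \<longleftrightarrow> finite X \<and> card X \<noteq> 1 \<and> (\<forall>x\<in>X. e x \<in> effects \<Omega>) \<and> (\<Sum>x\<in>X. e x) = u"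

definition pure_effect :: "(real^'n) set \<Rightarrow> real^'n \<Rightarrow> bool" where
  "pure_effect \<Omega> e \<longleftrightarrow> e extreme_point_of (effects \<Omega>)"

definition indecomposable :: "(real^'n) set \<Rightarrow> real^'n \<Rightarrow> bool" where
  "indecomposable \<Omega> e \<longleftrightarrow> e \<noteq> 0 \<and>
     (\<forall>e1\<in>effects \<Omega>. \<forall>e2\<in>effects \<Omega>. e = e1 + e2 \<longrightarrow>
        (\<exists>c. e1 = c *\<^sub>R e) \<and> (\<exists>c. e2 = c *\<^sub>R e))"

definition ideal_observable :: "(real^'n) set \<Rightarrow> real^'n \<Rightarrow> 'x set \<Rightarrow> ('x \<Rightarrow> real^'n) \<Rightarrow> bool" where
  "ideal_observable \<Omega> u X f \<longleftrightarrow> observable \<Omega> u X f \<and>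
     (\<forall>a\<in>X. \<exists>es::(real^'n) list.
        (\<forall>e\<in>set es. e \<in> effects \<Omega> \<and> pure_effect \<Omega> e \<and> indecomposable \<Omega> e) \<and>
        (f a = sum_list es \<or> f a = u - sum_list es))"

definition GL :: "(real^'n) set \<Rightarrow> (real^'n^'n) set" where
  "GL \<Omega> = {T. invertible T \<and> (\<lambda>x. T *v x) ` \<Omega> = \<Omega>}"

text \<open>M is the normalized Haar measure of the compact group GL(\<Omega>): a Borel probability
  measure on matrices concentrated on GL(\<Omega>) and invariant under left translation.
  (By existence and uniqueness of Haar measure this characterizes it.)\<close>
definition haar_GL :: "(real^'n) set \<Rightarrow> (real^'n^'n) measure \<Rightarrow> bool" where
  "haar_GL \<Omega> M \<longleftrightarrow> sets M = sets borel \<and> emeasure M (space M) = 1 \<and> emeasure M (GL \<Omega>) = 1 \<and>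
     (\<forall>T\<in>GL \<Omega>. distr M borel (\<lambda>S. T ** S) = M)"

definition GL_inner :: "(real^'n^'n) measure \<Rightarrow> real^'n \<Rightarrow> real^'n \<Rightarrow> real" where
  "GL_inner M x y = (\<integral>T. (T *v x) \<bullet> (T *v y) \<partial>M)"

definition transitive_ss :: "(real^'n) set \<Rightarrow> bool" where
  "transitive_ss \<Omega> \<longleftrightarrow> (\<forall>w1 w2. w1 extreme_point_of \<Omega> \<longrightarrow> w2 extreme_point_of \<Omega> \<longrightarrow>
      (\<exists>T\<in>GL \<Omega>. T *v w1 = w2))"

definition self_dual_wrt :: "(real^'n) set \<Rightarrow> (real^'n \<Rightarrow> real^'n \<Rightarrow> real) \<Rightarrow> bool" where
  "self_dual_wrt \<Omega> ip \<longleftrightarrow> pos_cone \<Omega> = {y. \<forall>x\<in>pos_cone \<Omega>. ip x y \<ge> 0}"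

definition LE :: "'x set \<Rightarrow> ('x \<Rightarrow> real^'n) \<Rightarrow> real^'n \<Rightarrow> real" where
  "LE X f w = 1 - Max ((\<lambda>a. f a \<bullet> w) ` X)"

definition D_inf :: "(real^'n) set \<Rightarrow> 'x set \<Rightarrow> ('x \<Rightarrow> real^'n) \<Rightarrow> ('x \<Rightarrow> real^'n) \<Rightarrow> real" where
  "D_inf \<Omega> X ft f = (SUP w\<in>\<Omega>. Max ((\<lambda>a. \<bar>ft a \<bullet> w - f a \<bullet> w\<bar>) ` X))"

end

theory Submission
  imports Defs "HOL-Probability.Probability"
begin

lemma continuous_on_matrix_mult[continuous_intros]:
  fixes f g :: "'x::topological_space \<Rightarrow> real^'n^'n"
  assumes "continuous_on S f" "continuous_on S g"
  shows "continuous_on S (\<lambda>x. f x ** g x)"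
  unfolding matrix_matrix_mult_def
  by (intro continuous_on_vec_lambda continuous_intros assms)

lemma continuous_on_transpose[continuous_intros]:
  fixes f :: "'x::topological_space \<Rightarrow> real^'n^'n"
  assumes "continuous_on S f"
  shows "continuous_on S (\<lambda>x. transpose (f x))"
  unfolding transpose_def
  by (intro continuous_on_vec_lambda continuous_intros assms)

lemma matrix_add_rdistrib': "((B + C) ** A) = (B ** A) + (C ** (A::real^'p^'m))" for B C :: "real^'m^'n"
  by (vector matrix_matrix_mult_def sum.distrib[symmetric] field_simps)

lemma linear_matrix_sandwich: "bounded_linear (\<lambda>X::real^'n^'n. A ** X ** B)"
  unfolding linear_conv_bounded_linear[symmetric]
  by (intro linearI) (simp_all add: matrix_add_ldistrib matrix_add_rdistrib' matrix_scalar_ac scalar_matrix_assoc)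

lemma bl_transpose: "bounded_linear (\<lambda>X::real^'n^'n. transpose X)"
  unfolding linear_conv_bounded_linear[symmetric]
  by (intro linearI) (simp_all add: transpose_def vec_eq_iff)

lemma bl_form: "bounded_linear (\<lambda>X::real^'n^'n. x \<bullet> (X *v y))"
  unfolding linear_conv_bounded_linear[symmetric]
  by (intro linearI) (simp_all add: matrix_vector_mult_add_rdistrib inner_add_right 
     scaleR_matrix_vector_assoc[symmetric])

lemma dot_mv: "x \<bullet> (A *v y) = (transpose A *v x) \<bullet> (y::real^'n)"
  by (simp add: dot_lmul_matrix[symmetric])

lemma form_tt: "x \<bullet> ((transpose A ** A) *v y) = (A *v x) \<bullet> (A *v (y::real^'n))"
proof -
  have "x \<bullet> ((transpose A ** A) *v y) = x \<bullet> (transpose A *v (A *v y))"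
    by (simp only: matrix_vector_mul_assoc)
  also have "\<dots> = (A *v x) \<bullet> (A *v y)"
    by (simp only: dot_mv transpose_transpose)
  finally show ?thesis .
qed

lemma form_t: "x \<bullet> ((A ** transpose A) *v y) = (transpose A *v x) \<bullet> (transpose A *v (y::real^'n))"
  using form_tt[of x "transpose A" y] by simp

locale gpt =
  fixes \<Omega> :: "(real^'n) set" and u :: "real^'n" and M :: "(real^'n^'n) measure"
  assumes ss: "state_space \<Omega>" and ue: "unit_effect \<Omega> u" and haar: "haar_GL \<Omega> M"
begin

abbreviation "G \<equiv> GL \<Omega>"

lemma sets_M: "sets M = sets borel" using haar by (simp add: haar_GL_def)

lemma space_M: "space M = UNIV"
  using sets_eq_imp_space_eq[OF sets_M] by simp

lemma prob: "prob_space M"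
  using haar by (intro prob_spaceI) (simp add: haar_GL_def)

lemma finM: "finite_measure M"
  using prob prob_space_def by blast

lemma G_sets: "G \<in> sets M"
  using haar emeasure_notin_sets[of G M] by (auto simp: haar_GL_def)

lemma AE_G: "AE S in M. S \<in> G"
proof -
  have "measure M G = 1" using haar by (simp add: haar_GL_def measure_def)
  then show ?thesis using prob_space.AE_prob_1[OF prob] by blast
qed

lemma meas_cont:
  fixes f :: "real^'n^'n \<Rightarrow> 'b::topological_space"
  assumes "continuous_on UNIV f" shows "f \<in> borel_measurable M"
  using borel_measurable_continuous_onI[OF assms] measurable_cong_sets[OF sets_M refl] by blast

lemma Omega_compact: "compact \<Omega>" and Omega_convex: "convex \<Omega>"
  and Omega_span: "span \<Omega> = UNIV" and Omega_aff: "0 \<notin> affine hull \<Omega>"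
  using ss by (auto simp: state_space_def)

lemma u1: "w \<in> \<Omega> \<Longrightarrow> u \<bullet> w = 1" using ue by (simp add: unit_effect_def)

lemma Omega_ne: "\<Omega> \<noteq> {}"
proof
  assume "\<Omega> = {}"
  then have "span \<Omega> = {0}" by simp
  then show False using Omega_span
    by (metis UNIV_I axis_eq_0_iff singletonD zero_neq_one)
qed

lemma G_inv: "T \<in> G \<Longrightarrow> invertible T"
  by (simp add: GL_def)

lemma G_img: "T \<in> G \<Longrightarrow> (\<lambda>x. T *v x) ` \<Omega> = \<Omega>"
  by (simp add: GL_def)

lemma G_mult: "S \<in> G \<Longrightarrow> T \<in> G \<Longrightarrow> S ** T \<in> G"
proof -
  assume a: "S \<in> G" "T \<in> G"
  have "(\<lambda>x. (S ** T) *v x) ` \<Omega> = (\<lambda>x. S *v x) ` ((\<lambda>x. T *v x) ` \<Omega>)"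
    by (simp add: image_image matrix_vector_mul_assoc)
  also have "\<dots> = \<Omega>" using a by (simp add: G_img)
  finally show ?thesis using a invertible_mult G_inv unfolding GL_def by blast
qed

lemma G_inverse:
  assumes "T \<in> G" obtains T' where "T' \<in> G" "T ** T' = mat 1" "T' ** T = mat 1"
proof -
  obtain T' where a: "T ** T' = mat 1" "T' ** T = mat 1"
    using G_inv[OF assms] invertible_def by blast
  have "invertible T'" using a invertible_def by blast
  moreover have "(\<lambda>x. T' *v x) ` \<Omega> = \<Omega>"
  proof -
    have "(\<lambda>x. T' *v x) ` \<Omega> = (\<lambda>x. T' *v x) ` ((\<lambda>x. T *v x) ` \<Omega>)" using G_img[OF assms] by simp
    also have "\<dots> = \<Omega>" by (simp add: image_image matrix_vector_mul_assoc a)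
    finally show ?thesis .
  qed
  ultimately have "T' \<in> G" unfolding GL_def by blast
  then show ?thesis using that a by blast
qed

end

context gpt begin

lemma Omega_bounded: obtains r where "\<And>w. w \<in> \<Omega> \<Longrightarrow> norm w \<le> r"
  using compact_imp_bounded[OF Omega_compact] bounded_iff by metis

lemma G_bounded: obtains B where "\<And>T. T \<in> G \<Longrightarrow> norm T \<le> B"
proof -
  obtain r where r: "\<And>w. w \<in> \<Omega> \<Longrightarrow> norm w \<le> r" using Omega_bounded by blast
  have "\<exists>C. \<forall>T\<in>G. norm (T *v axis j 1) \<le> C" for j
  proof -
    have "axis j 1 \<in> span \<Omega>" using Omega_span by simp
    then obtain t c where t: "finite t" "t \<subseteq> \<Omega>" "axis j 1 = (\<Sum>a\<in>t. c a *\<^sub>R a)"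
      unfolding real_vector.span_explicit by blast
    have "norm (T *v axis j 1) \<le> (\<Sum>a\<in>t. \<bar>c a\<bar> * r)" if "T \<in> G" for T
    proof -
      have "T *v axis j 1 = (\<Sum>a\<in>t. c a *\<^sub>R (T *v a))"
        by (simp add: t(3) linear_sum[OF matrix_vector_mul_linear] linear_cmul[OF matrix_vector_mul_linear])
      also have "norm \<dots> \<le> (\<Sum>a\<in>t. norm (c a *\<^sub>R (T *v a)))" by (rule norm_sum)
      also have "\<dots> \<le> (\<Sum>a\<in>t. \<bar>c a\<bar> * r)"
      proof (rule sum_mono)
        fix a assume "a \<in> t"
        then have "T *v a \<in> \<Omega>" using G_img[OF that] t(2) by blast
        then show "norm (c a *\<^sub>R (T *v a)) \<le> \<bar>c a\<bar> * r" using r by (simp add: mult_left_mono)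
      qed
      finally show ?thesis .
    qed
    then show ?thesis by blast
  qed
  then obtain C where C: "\<And>j T. T \<in> G \<Longrightarrow> norm (T *v axis j 1) \<le> C j" by metis
  have "norm T \<le> (\<Sum>i\<in>(UNIV::'n set). \<Sum>j\<in>UNIV. C j)" if "T \<in> G" for T
  proof -
    have "norm T \<le> (\<Sum>i\<in>UNIV. norm (T $ i))" unfolding norm_vec_def by (rule L2_set_le_sum) simp
    also have "\<dots> \<le> (\<Sum>i\<in>UNIV. \<Sum>j\<in>UNIV. \<bar>T $ i $ j\<bar>)"
      by (intro sum_mono norm_le_l1_cart)
    also have "\<dots> \<le> (\<Sum>i\<in>(UNIV::'n set). \<Sum>j\<in>UNIV. C j)"
    proof -
      have b: "\<bar>T $ i $ j\<bar> \<le> C j" for i j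
      proof -
      have "\<bar>T $ i $ j\<bar> = \<bar>(T *v axis j 1) $ i\<bar>"
        by (simp add: matrix_vector_mult_basis column_def)
      also have "\<dots> \<le> norm (T *v axis j 1)" by (rule component_le_norm_cart)
      finally show "\<bar>T $ i $ j\<bar> \<le> C j" using C[OF that, of j] by linarith
      qed
      have c: "(\<Sum>j\<in>UNIV. \<bar>T $ i $ j\<bar>) \<le> sum C UNIV" for i by (rule sum_mono) (rule b)
      show ?thesis by (rule sum_mono) (rule c)
    qed
    finally show ?thesis .
  qed
  then show ?thesis using that by blast
qed

lemma cont_bounded_G:
  fixes f :: "real^'n^'n \<Rightarrow> 'b::real_normed_vector"
  assumes "continuous_on UNIV f" obtains C where "\<And>T. T \<in> G \<Longrightarrow> norm (f T) \<le> C"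
proof -
  obtain B where B: "\<And>T. T \<in> G \<Longrightarrow> norm T \<le> B" using G_bounded by blast
  have "compact (f ` cball 0 B)"
    by (rule compact_continuous_image[OF continuous_on_subset[OF assms]]) auto
  then obtain C where "\<forall>y\<in>f ` cball 0 B. norm y \<le> C" using compact_imp_bounded bounded_iff by metis
  then show ?thesis using that B by fastforce
qed

lemma integrable_cont:
  fixes f :: "real^'n^'n \<Rightarrow> 'b::{banach, second_countable_topology}"
  assumes "continuous_on UNIV f" shows "integrable M f"
proof -
  obtain C where C: "\<And>T. T \<in> G \<Longrightarrow> norm (f T) \<le> C" using cont_bounded_G[OF assms] by blast
  show ?thesis
    by (rule finite_measure.integrable_const_bound[OF finM, of f C])
       (use AE_G C in \<open>auto elim: AE_mp intro: meas_cont assms\<close>)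
qed

lemma left_inv:
  fixes f :: "real^'n^'n \<Rightarrow> 'b::{banach, second_countable_topology}"
  assumes T: "T \<in> G" and f: "continuous_on UNIV f"
  shows "(\<integral>S. f (T ** S) \<partial>M) = (\<integral>S. f S \<partial>M)"
proof -
  have d: "distr M borel (\<lambda>S. T ** S) = M" using haar T by (simp add: haar_GL_def)
  have m: "(\<lambda>S. T ** S) \<in> measurable M borel"
    by (rule meas_cont) (intro continuous_intros)
  have "(\<integral>S. f (T ** S) \<partial>M) = integral\<^sup>L (distr M borel (\<lambda>S. T ** S)) f"
    by (rule integral_distr[symmetric, OF m borel_measurable_continuous_onI[OF f]])
  then show ?thesis using d by simp
qed

lemma integral_AE_const:
  fixes f :: "real^'n^'n \<Rightarrow> 'b::{banach, second_countable_topology}"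
  assumes "\<And>S. S \<in> G \<Longrightarrow> f S = c" and fc: "continuous_on UNIV f" shows "(\<integral>S. f S \<partial>M) = c"
proof -
  have "(\<integral>S. f S \<partial>M) = (\<integral>S. c \<partial>M)"
    by (rule integral_cong_AE) (use AE_G assms in \<open>auto elim: AE_mp simp: meas_cont[OF fc]\<close>)
  also have "\<dots> = c"
  proof -
    have "emeasure M (space M) = 1" using haar by (simp add: haar_GL_def)
    then show ?thesis by (simp add: measure_def)
  qed
  finally show ?thesis .
qed

end

context gpt begin

lemma sfM: "sigma_finite_measure M" using finM finite_measure_def by blast

lemma pos_integral:
  assumes phi: "continuous_on UNIV (\<phi> :: real^'n^'n \<Rightarrow> real^'n)" and nz: "\<And>S. S \<in> G \<Longrightarrow> \<phi> S \<noteq> 0"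
  shows "(\<integral>S. \<phi> S \<bullet> \<phi> S \<partial>M) > 0"
proof -
  have ci: "continuous_on UNIV (\<lambda>S. \<phi> S \<bullet> \<phi> S)" by (intro continuous_intros phi)
  have int: "integrable M (\<lambda>S. \<phi> S \<bullet> \<phi> S)" by (rule integrable_cont[OF ci])
  have ge: "(\<integral>S. \<phi> S \<bullet> \<phi> S \<partial>M) \<ge> 0" by (rule integral_nonneg_AE) simp
  show ?thesis
  proof (rule ccontr)
    assume "\<not> ?thesis"
    then have "(\<integral>S. \<phi> S \<bullet> \<phi> S \<partial>M) = 0" using ge by simp
    then have "AE S in M. \<phi> S \<bullet> \<phi> S = 0"
      using integral_nonneg_eq_0_iff_AE[OF int] by simp
    then have "AE S in M. False" using AE_G nz by (auto elim: AE_mp)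
    then show False using prob_space.AE_False[OF prob] by blast
  qed
qed

definition "Kmat = (\<integral>S. S ** transpose S \<partial>M)"
definition "Qmat = (\<integral>S. transpose S ** S \<partial>M)"

lemma int_K: "integrable M (\<lambda>S::real^'n^'n. S ** transpose S)"
  by (rule integrable_cont) (intro continuous_intros)
lemma int_Q: "integrable M (\<lambda>S::real^'n^'n. transpose S ** S)"
  by (rule integrable_cont) (intro continuous_intros)

lemma K_inv: assumes T: "T \<in> G" shows "T ** Kmat ** transpose T = Kmat"
proof -
  have "T ** Kmat ** transpose T = (\<integral>S. T ** (S ** transpose S) ** transpose T \<partial>M)"
    unfolding Kmat_def by (rule integral_bounded_linear[OF linear_matrix_sandwich int_K, symmetric])
  also have "\<dots> = (\<integral>S. (T ** S) ** transpose (T ** S) \<partial>M)"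
    by (simp add: matrix_transpose_mul matrix_mul_assoc)
  also have "\<dots> = Kmat" unfolding Kmat_def
    by (rule left_inv[OF T, of "\<lambda>S. S ** transpose S"]) (intro continuous_intros)
  finally show ?thesis .
qed

lemma K_pd: assumes "x \<noteq> 0" shows "x \<bullet> (Kmat *v x) > 0"
proof -
  have "x \<bullet> (Kmat *v x) = (\<integral>S. x \<bullet> ((S ** transpose S) *v x) \<partial>M)"
    unfolding Kmat_def by (rule integral_bounded_linear[OF bl_form int_K, symmetric])
  also have "\<dots> = (\<integral>S. (transpose S *v x) \<bullet> (transpose S *v x) \<partial>M)" by (simp only: form_t)
  also have "\<dots> > 0"
  proof (rule pos_integral)
    show "continuous_on UNIV (\<lambda>S::real^'n^'n. transpose S *v x)"
      unfolding matrix_vector_mult_def transpose_def by (intro continuous_on_vec_lambda continuous_intros)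
    fix S assume "S \<in> G"
    then have "inj ((*v) (transpose S))" using G_inv transpose_invertible inj_matrix_vector_mult by blast
    then show "transpose S *v x \<noteq> 0" using assms by (metis injD matrix_vector_mult_0_right)
  qed
  finally show ?thesis .
qed

lemma Q_pd: assumes "x \<noteq> 0" shows "x \<bullet> (Qmat *v x) > 0"
proof -
  have "x \<bullet> (Qmat *v x) = (\<integral>S. x \<bullet> ((transpose S ** S) *v x) \<partial>M)"
    unfolding Qmat_def by (rule integral_bounded_linear[OF bl_form int_Q, symmetric])
  also have "\<dots> = (\<integral>S. (S *v x) \<bullet> (S *v x) \<partial>M)" by (simp only: form_tt)
  also have "\<dots> > 0"
  proof (rule pos_integral)
    show "continuous_on UNIV (\<lambda>S::real^'n^'n. S *v x)"
      unfolding matrix_vector_mult_def by (intro continuous_on_vec_lambda continuous_intros)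
    fix S assume "S \<in> G"
    then have "inj ((*v) S)" using G_inv inj_matrix_vector_mult by blast
    then show "S *v x \<noteq> 0" using assms by (metis injD matrix_vector_mult_0_right)
  qed
  finally show ?thesis .
qed

lemma pd_invertible:
  fixes A :: "real^'n^'n"
  assumes "\<And>x. x \<noteq> 0 \<Longrightarrow> x \<bullet> (A *v x) > 0" shows "invertible A"
proof -
  have "inj ((*v) A)"
  proof (rule injI)
    fix x y assume "A *v x = A *v y"
    then have "A *v (x - y) = 0" by (simp add: matrix_vector_mult_diff_distrib)
    then show "x = y" using assms[of "x - y"] by fastforce
  qed
  then show ?thesis using matrix_left_invertible_injective invertible_left_inverse by blast
qed

lemma K_invertible: "invertible Kmat" by (rule pd_invertible[OF K_pd])
lemma Q_invertible: "invertible Qmat" by (rule pd_invertible[OF Q_pd])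

definition "Ki = matrix_inv Kmat"

lemma matrix_inv_right: "invertible A \<Longrightarrow> A ** matrix_inv A = mat 1"
  unfolding matrix_inv_def invertible_def by (rule someI_ex[THEN conjunct1]) 

lemma KKi: "Kmat ** Ki = mat 1" unfolding Ki_def by (rule matrix_inv_right[OF K_invertible])

definition "iota S = Kmat ** transpose S ** Ki"

lemma iota_cont: "continuous_on UNIV iota"
  unfolding iota_def by (intro continuous_intros)

lemma iota_right: "S \<in> G \<Longrightarrow> S ** iota S = mat 1"
  unfolding iota_def by (metis K_inv KKi matrix_mul_assoc)

lemma iota_left: "S \<in> G \<Longrightarrow> iota S ** S = mat 1"
  using iota_right matrix_left_right_inverse by blast

lemma iota_unique: "A \<in> G \<Longrightarrow> A ** B = mat 1 \<Longrightarrow> iota A = B"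
  by (metis iota_left matrix_mul_assoc matrix_mul_lid matrix_mul_rid)

lemma iota_G: "S \<in> G \<Longrightarrow> iota S \<in> G"
  by (metis G_inverse iota_unique)

lemma iota_swap: "R \<in> G \<Longrightarrow> S \<in> G \<Longrightarrow> iota R ** S = iota (iota S ** R)"
proof -
  assume R: "R \<in> G" and S: "S \<in> G"
  have "(iota S ** R) ** (iota R ** S) = mat 1"
    by (metis R S iota_left iota_right matrix_mul_assoc matrix_mul_rid)
  then show ?thesis using iota_unique[OF G_mult[OF iota_G[OF S] R]] by simp
qed

end

context gpt begin

lemma iota_cont'[continuous_intros]: "continuous_on S f \<Longrightarrow> continuous_on S (\<lambda>x. iota (f x))"
  unfolding iota_def by (intro continuous_intros)

definition "Q' = (\<integral>S. transpose (iota S) ** iota S \<partial>M)"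

lemma integral_AE_const':
  fixes f :: "real^'n^'n \<Rightarrow> 'b::{banach, second_countable_topology}"
  assumes "\<And>S. S \<in> G \<Longrightarrow> f S = c" and fc: "f \<in> borel_measurable M" shows "(\<integral>S. f S \<partial>M) = c"
proof -
  have "(\<integral>S. f S \<partial>M) = (\<integral>S. c \<partial>M)"
    by (rule integral_cong_AE) (use AE_G assms in \<open>auto elim: AE_mp\<close>)
  also have "\<dots> = c"
  proof -
    have "emeasure M (space M) = 1" using haar by (simp add: haar_GL_def)
    then show ?thesis by (simp add: measure_def)
  qed
  finally show ?thesis .
qed

lemma Q_eq_Q': "Qmat = Q'"
proof -
  interpret P: pair_sigma_finite M M
    by (simp add: pair_sigma_finite_def sfM)
  define F where "F = (\<lambda>R (S::real^'n^'n). transpose (iota R ** S) ** (iota R ** S))"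
  have Fc: "continuous_on UNIV (case_prod F)"
    unfolding F_def case_prod_unfold
    by (intro continuous_intros)
  have setsP: "sets (M \<Otimes>\<^sub>M M) = sets borel"
    using sets_pair_measure_cong[OF sets_M sets_M] borel_prod by metis
  have measF: "case_prod F \<in> borel_measurable (M \<Otimes>\<^sub>M M)"
    using borel_measurable_continuous_onI[OF Fc] measurable_cong_sets[OF setsP refl] by blast
  have "integrable (M \<Otimes>\<^sub>M M) (case_prod F)"
  proof -
    obtain B where B: "\<And>T. T \<in> G \<Longrightarrow> norm T \<le> B" using G_bounded by blast
    have "compact (case_prod F ` (cball 0 B \<times> cball 0 B))"
      by (rule compact_continuous_image[OF continuous_on_subset[OF Fc]]) (auto intro: compact_Times)
    then obtain C where C: "\<forall>y\<in>case_prod F ` (cball 0 B \<times> cball 0 B). norm y \<le> C"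
      using compact_imp_bounded bounded_iff by metis
    have GG: "G \<times> G \<in> sets (M \<Otimes>\<^sub>M M)" using G_sets by (rule pair_measureI) (rule G_sets)
    have "AE x in M \<Otimes>\<^sub>M M. x \<in> G \<times> G"
    proof (rule P.AE_pair_measure)
      have "{x \<in> space (M \<Otimes>\<^sub>M M). x \<in> G \<times> G} = G \<times> G" by (auto simp: space_pair_measure space_M)
      then show "{x \<in> space (M \<Otimes>\<^sub>M M). x \<in> G \<times> G} \<in> sets (M \<Otimes>\<^sub>M M)" using GG by simp
      show "AE x in M. AE y in M. (x, y) \<in> G \<times> G"
        using AE_G by (auto elim!: AE_mp)
    qed
    then have "AE x in M \<Otimes>\<^sub>M M. norm (case_prod F x) \<le> C"
      using C B by (auto elim!: AE_mp)
    then show ?thesis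
      by (intro finite_measure.integrable_const_bound[OF finite_measure_pair_measure[OF finM finM]] measF)
  qed
  from P.Fubini_integral[OF this]
  have fub: "(\<integral>S. (\<integral>R. F R S \<partial>M) \<partial>M) = (\<integral>R. (\<integral>S. F R S \<partial>M) \<partial>M)" .
  have "(\<integral>R. (\<integral>S. F R S \<partial>M) \<partial>M) = Qmat"
  proof (rule integral_AE_const')
    fix R assume R: "R \<in> G"
    show "(\<integral>S. F R S \<partial>M) = Qmat" unfolding F_def Qmat_def
      by (rule left_inv[OF iota_G[OF R], of "\<lambda>S. transpose S ** S"]) (intro continuous_intros)
  next
    show "(\<lambda>R. \<integral>S. F R S \<partial>M) \<in> borel_measurable M"
      by (rule sigma_finite_measure.borel_measurable_lebesgue_integral[OF sfM measF])
  qed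
  moreover have "(\<integral>S. (\<integral>R. F R S \<partial>M) \<partial>M) = Q'"
  proof (rule integral_AE_const')
    fix S assume S: "S \<in> G"
    have "(\<integral>R. F R S \<partial>M) = (\<integral>R. transpose (iota (iota S ** R)) ** iota (iota S ** R) \<partial>M)"
    proof (rule integral_cong_AE)
      show "(\<lambda>R. F R S) \<in> borel_measurable M" unfolding F_def
        by (rule meas_cont) (intro continuous_intros)
      show "(\<lambda>R. transpose (iota (iota S ** R)) ** iota (iota S ** R)) \<in> borel_measurable M"
        by (rule meas_cont) (intro continuous_intros)
      show "AE R in M. F R S = transpose (iota (iota S ** R)) ** iota (iota S ** R)"
        using AE_G by (auto elim!: AE_mp simp: F_def iota_swap[OF _ S])
    qed
    also have "\<dots> = Q'" unfolding Q'_def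
      by (rule left_inv[OF iota_G[OF S], of "\<lambda>A. transpose (iota A) ** iota A"])
         (intro continuous_intros)
    finally show "(\<integral>R. F R S \<partial>M) = Q'" .
  next
    have m2: "(\<lambda>(S, R). F R S) \<in> borel_measurable (M \<Otimes>\<^sub>M M)"
      using measurable_pair_swap[OF measF] by (simp add: case_prod_unfold)
    show "(\<lambda>S. \<integral>R. F R S \<partial>M) \<in> borel_measurable M"
      by (rule sigma_finite_measure.borel_measurable_lebesgue_integral[OF sfM]) (use m2 in simp)
  qed
  ultimately show ?thesis using fub by simp
qed

lemma Q_inv: assumes T: "T \<in> G" shows "transpose T ** Qmat ** T = Qmat"
proof -
  have int: "integrable M (\<lambda>S. transpose (iota S) ** iota S)"
    by (rule integrable_cont) (intro continuous_intros)
  have "transpose T ** Qmat ** T = (\<integral>S. transpose T ** (transpose (iota S) ** iota S) ** T \<partial>M)"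
    unfolding Q_eq_Q' Q'_def by (rule integral_bounded_linear[OF linear_matrix_sandwich int, symmetric])
  also have "\<dots> = (\<integral>S. transpose (iota S ** T) ** (iota S ** T) \<partial>M)"
    by (simp add: matrix_transpose_mul matrix_mul_assoc)
  also have "\<dots> = (\<integral>S. transpose (iota (iota T ** S)) ** iota (iota T ** S) \<partial>M)"
  proof (rule integral_cong_AE)
    show "(\<lambda>S. transpose (iota S ** T) ** (iota S ** T)) \<in> borel_measurable M"
      by (rule meas_cont) (intro continuous_intros)
    show "(\<lambda>S. transpose (iota (iota T ** S)) ** iota (iota T ** S)) \<in> borel_measurable M"
      by (rule meas_cont) (intro continuous_intros)
    show "AE S in M. transpose (iota S ** T) ** (iota S ** T) = transpose (iota (iota T ** S)) ** iota (iota T ** S)"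
      using AE_G by (auto elim!: AE_mp simp: iota_swap[OF _ T])
  qed
  also have "\<dots> = Q'" unfolding Q'_def
    by (rule left_inv[OF iota_G[OF T], of "\<lambda>A. transpose (iota A) ** iota A"])
       (intro continuous_intros)
  finally show ?thesis using Q_eq_Q' by simp
qed

lemma Q_sym: "transpose Qmat = Qmat"
proof -
  have "transpose Qmat = (\<integral>S. transpose (transpose S ** S) \<partial>M)"
    unfolding Qmat_def by (rule integral_bounded_linear[OF bl_transpose int_Q, symmetric])
  also have "\<dots> = Qmat" unfolding Qmat_def by (simp add: matrix_transpose_mul)
  finally show ?thesis .
qed

lemma GL_inner_Q: "GL_inner M x y = x \<bullet> (Qmat *v y)"
proof -
  have "x \<bullet> (Qmat *v y) = (\<integral>S. x \<bullet> ((transpose S ** S) *v y) \<partial>M)"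
    unfolding Qmat_def by (rule integral_bounded_linear[OF bl_form int_Q, symmetric])
  then show ?thesis unfolding GL_inner_def by (simp only: form_tt)
qed

end

locale gpt2 = gpt +
  assumes trans: "transitive_ss \<Omega>" and sd: "self_dual_wrt \<Omega> (GL_inner M)"
begin

definition "ip x y = x \<bullet> (Qmat *v y)"
definition "Qi = matrix_inv Qmat"
definition "H e = Qi *v e"

lemma QQi: "Qmat ** Qi = mat 1" unfolding Qi_def by (rule matrix_inv_right[OF Q_invertible])
lemma QiQ: "Qi ** Qmat = mat 1" using QQi matrix_left_right_inverse by blast

lemma QH: "Qmat *v H e = e" unfolding H_def by (simp add: matrix_vector_mul_assoc QQi)
lemma Q_inj: assumes "Qmat *v x = Qmat *v y" shows "x = y"
proof -
  have "Qi *v (Qmat *v x) = Qi *v (Qmat *v y)" using assms by simp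
  then show ?thesis by (simp add: matrix_vector_mul_assoc QiQ)
qed

lemma ip_H: "ip x (H e) = x \<bullet> e" by (simp add: ip_def QH)

lemma ip_sym: "ip x y = ip y x"
  unfolding ip_def by (simp only: dot_mv[of x] Q_sym inner_commute[of _ y])

lemma ip_left: "ip x y = (Qmat *v x) \<bullet> y"
  unfolding ip_def by (simp only: dot_mv[of x] Q_sym)

lemma ip_add_left: "ip (x + y) z = ip x z + ip y z" by (simp add: ip_def inner_add_left)
lemma ip_add_right: "ip x (y + z) = ip x y + ip x z" by (simp add: ip_def inner_add_right matrix_vector_right_distrib)
lemma ip_diff_left: "ip (x - y) z = ip x z - ip y z" by (simp add: ip_def inner_diff_left)
lemma ip_diff_right: "ip x (y - z) = ip x y - ip x z" by (simp add: ip_def inner_diff_right matrix_vector_mult_diff_distrib)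
lemma ip_scale_left: "ip (c *\<^sub>R x) z = c * ip x z" by (simp add: ip_def)
lemma ip_scale_right: "ip x (c *\<^sub>R z) = c * ip x z" by (simp add: ip_def matrix_vector_mult_scaleR)

lemma ip_pos: "x \<noteq> 0 \<Longrightarrow> ip x x > 0" unfolding ip_def by (rule Q_pd)
lemma ip_nonneg: "ip x x \<ge> 0"
proof (cases "x = 0")
  case True then show ?thesis by (simp add: ip_def)
next
  case False then show ?thesis using ip_pos[of x] by linarith
qed

lemma ip_inv: "T \<in> G \<Longrightarrow> ip (T *v x) (T *v y) = ip x y"
proof -
  assume T: "T \<in> G"
  have "ip (T *v x) (T *v y) = x \<bullet> (transpose T *v (Qmat *v (T *v y)))"
    by (simp only: ip_def dot_mv[of x "transpose T"] transpose_transpose)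
  also have "\<dots> = x \<bullet> ((transpose T ** Qmat ** T) *v y)" by (simp add: matrix_vector_mul_assoc matrix_mul_assoc)
  also have "\<dots> = ip x y" using Q_inv[OF T] by (simp add: ip_def)
  finally show ?thesis .
qed

lemma H_add: "H (a + b) = H a + H b" by (simp add: H_def matrix_vector_right_distrib)
lemma H_diff: "H (a - b) = H a - H b" by (simp add: H_def matrix_vector_mult_diff_distrib)
lemma H_scale: "H (c *\<^sub>R a) = c *\<^sub>R H a" by (simp add: H_def matrix_vector_mult_scaleR)
lemma H_sum: "H (sum f X) = (\<Sum>x\<in>X. H (f x))"
  unfolding H_def by (rule linear_sum[OF matrix_vector_mul_linear])
lemma H_zero: "H 0 = 0" by (simp add: H_def)

lemma eval_H: "e \<bullet> y = ip y (H e)" by (simp add: ip_H inner_commute)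

lemma sd': "pos_cone \<Omega> = {y. \<forall>x\<in>pos_cone \<Omega>. ip x y \<ge> 0}"
  unfolding ip_def using sd unfolding self_dual_wrt_def GL_inner_Q .

lemma Omega_pc: "w \<in> \<Omega> \<Longrightarrow> w \<in> pos_cone \<Omega>"
  unfolding pos_cone_def by (rule CollectI, rule exI[of _ 1]) auto

lemma pos_pos: assumes "x \<in> pos_cone \<Omega>" "y \<in> pos_cone \<Omega>" shows "ip x y \<ge> 0"
proof -
  have "y \<in> {y. \<forall>x\<in>pos_cone \<Omega>. ip x y \<ge> 0}" using assms(2) by (subst sd'[symmetric])
  then show ?thesis using assms(1) by simp
qed

lemma Omega_ip_nonneg: "x \<in> \<Omega> \<Longrightarrow> y \<in> \<Omega> \<Longrightarrow> ip x y \<ge> 0"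
  by (rule pos_pos[OF Omega_pc Omega_pc])

lemma effect_H: assumes "e \<in> effects \<Omega>" shows "H e \<in> pos_cone \<Omega>"
proof -
  have P: "\<forall>x\<in>pos_cone \<Omega>. ip x (H e) \<ge> 0"
  proof
    fix x assume "x \<in> pos_cone \<Omega>"
    then obtain c w where cw: "c \<ge> 0" "w \<in> \<Omega>" "x = c *\<^sub>R w" unfolding pos_cone_def by (auto simp: mem_Collect_eq)
    have "e \<bullet> w \<ge> 0" using assms cw(2) unfolding effects_def by auto
    then have "w \<bullet> e \<ge> 0" by (simp only: inner_commute)
    then show "ip x (H e) \<ge> 0" using cw by (simp add: ip_H)
  qed
  have eq: "{y. \<forall>x\<in>pos_cone \<Omega>. ip x y \<ge> 0} = pos_cone \<Omega>" by (rule sd'[symmetric])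
  have "H e \<in> {y. \<forall>x\<in>pos_cone \<Omega>. ip x y \<ge> 0}" using P by (simp only: mem_Collect_eq)
  then show ?thesis by (simp only: eq)
qed

lemma effect_H_obtain: assumes "e \<in> effects \<Omega>"
  obtains l \<sigma> where "l \<ge> 0" "\<sigma> \<in> \<Omega>" "H e = l *\<^sub>R \<sigma>"
proof -
  have "H e \<in> pos_cone \<Omega>" by (rule effect_H[OF assms])
  then obtain l \<sigma> where "l \<ge> 0" "\<sigma> \<in> \<Omega>" "H e = l *\<^sub>R \<sigma>" unfolding pos_cone_def by (auto simp: mem_Collect_eq)
  then show ?thesis using that by blast
qed

lemma Omega_nz: "w \<in> \<Omega> \<Longrightarrow> w \<noteq> 0" using u1 by fastforce

lemma ext_exists: obtains w0 where "w0 extreme_point_of \<Omega>"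
proof -
  have "\<Omega> = convex hull {x. x extreme_point_of \<Omega>}"
    by (rule Krein_Milman_Minkowski[OF Omega_compact Omega_convex])
  moreover have "{x. x extreme_point_of \<Omega>} \<noteq> {}"
  proof
    assume "{x. x extreme_point_of \<Omega>} = {}"
    with \<open>\<Omega> = _\<close> have "\<Omega> = {}" by simp
    then show False using Omega_ne by simp
  qed
  then show ?thesis using that by blast
qed

definition "w0 = (SOME w. w extreme_point_of \<Omega>)"
definition "rho = ip w0 w0"

lemma w0_ext: "w0 extreme_point_of \<Omega>"
  unfolding w0_def by (rule someI_ex) (use ext_exists in blast)

lemma ext_in: "w extreme_point_of \<Omega> \<Longrightarrow> w \<in> \<Omega>" by (simp add: extreme_point_of_def)

lemma rho_ext: assumes "w extreme_point_of \<Omega>" shows "ip w w = rho"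
proof -
  obtain T where "T \<in> G" "T *v w0 = w" using trans w0_ext assms unfolding transitive_ss_def by blast
  then show ?thesis unfolding rho_def using ip_inv[of T w0 w0] by simp
qed

lemma rho_pos: "rho > 0"
  unfolding rho_def by (rule ip_pos[OF Omega_nz[OF ext_in[OF w0_ext]]])

lemma ext_bound: assumes w: "w extreme_point_of \<Omega>" and x: "x \<in> \<Omega>" shows "ip w x \<le> rho"
proof -
  have "\<Omega> \<subseteq> {x. (Qmat *v w) \<bullet> x \<le> rho}"
  proof -
    have "{x. x extreme_point_of \<Omega>} \<subseteq> {x. (Qmat *v w) \<bullet> x \<le> rho}"
    proof
      fix v assume "v \<in> {x. x extreme_point_of \<Omega>}"
      then have v: "v extreme_point_of \<Omega>" by simp
      have "0 \<le> ip (w - v) (w - v)" by (rule ip_nonneg)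
      also have "\<dots> = ip w w + ip v v - 2 * ip w v"
        by (simp add: ip_diff_left ip_diff_right ip_sym[of v w])
      finally have "ip w v \<le> rho" using rho_ext[OF w] rho_ext[OF v] by simp
      then show "v \<in> {x. (Qmat *v w) \<bullet> x \<le> rho}" by (simp add: ip_left)
    qed
    then have "convex hull {x. x extreme_point_of \<Omega>} \<subseteq> {x. (Qmat *v w) \<bullet> x \<le> rho}"
      by (rule hull_minimal) (rule convex_halfspace_le)
    then show ?thesis using Krein_Milman_Minkowski[OF Omega_compact Omega_convex] by simp
  qed
  then show ?thesis using x by (auto simp: ip_left)
qed

end

context gpt2 begin

lemma effects_le: "e \<in> effects \<Omega> \<Longrightarrow> x \<in> \<Omega> \<Longrightarrow> e \<bullet> x \<le> 1" by (simp add: effects_def)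
lemma effects_ge: "e \<in> effects \<Omega> \<Longrightarrow> x \<in> \<Omega> \<Longrightarrow> 0 \<le> e \<bullet> x" by (simp add: effects_def)

lemma pure_key:
  assumes e: "e \<in> effects \<Omega>" and pe: "pure_effect \<Omega> e" and ind: "indecomposable \<Omega> e"
  obtains l \<sigma> where "l \<ge> 0" "\<sigma> \<in> \<Omega>" "H e = l *\<^sub>R \<sigma>" "e \<bullet> \<sigma> = 1"
proof -
  obtain l \<sigma> where l: "l \<ge> 0" and s: "\<sigma> \<in> \<Omega>" and He: "H e = l *\<^sub>R \<sigma>"
    using effect_H_obtain[OF e] by blast
  have enz: "e \<noteq> 0" using ind by (simp add: indecomposable_def)
  have eQ: "e = Qmat *v (l *\<^sub>R \<sigma>)" using QH[of e] He by simp
  have lpos: "l > 0"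
  proof (rule ccontr)
    assume "\<not> l > 0" then have "l = 0" using l by simp
    then show False using eQ enz by simp
  qed
  have ev: "e \<bullet> x = l * ip x \<sigma>" for x by (simp add: eval_H He ip_scale_right)
  have sext: "\<sigma> extreme_point_of \<Omega>"
    unfolding extreme_point_of_def
  proof (intro conjI s ballI notI)
    fix a b assume a: "a \<in> \<Omega>" and b: "b \<in> \<Omega>" and sab: "\<sigma> \<in> open_segment a b"
    then obtain t where ab: "a \<noteq> b" and t: "0 < t" "t < 1" and st: "\<sigma> = (1 - t) *\<^sub>R a + t *\<^sub>R b"
      unfolding in_segment by blast
    define e1 where "e1 = (l * (1 - t)) *\<^sub>R (Qmat *v a)"
    define e2 where "e2 = (l * t) *\<^sub>R (Qmat *v b)"
    have e1v: "e1 \<bullet> x = l * (1 - t) * ip x a" for x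
      by (simp add: e1_def ip_def inner_commute)
    have e2v: "e2 \<bullet> x = l * t * ip x b" for x
      by (simp add: e2_def ip_def inner_commute)
    have esum: "e = e1 + e2"
      unfolding eQ e1_def e2_def st
      by (simp add: matrix_vector_right_distrib matrix_vector_mult_scaleR algebra_simps)
    have e12: "e \<bullet> x = e1 \<bullet> x + e2 \<bullet> x" for x using esum by (simp add: inner_add_left)
    have ipa: "ip x a \<ge> 0" if "x \<in> \<Omega>" for x by (rule Omega_ip_nonneg[OF that a])
    have ipb: "ip x b \<ge> 0" if "x \<in> \<Omega>" for x by (rule Omega_ip_nonneg[OF that b])
    have e1e: "e1 \<in> effects \<Omega>" unfolding effects_def
    proof (intro CollectI ballI conjI)
      fix x assume x: "x \<in> \<Omega>"
      show "0 \<le> e1 \<bullet> x" using e1v ipa[OF x] lpos t by simp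
      have "0 \<le> e2 \<bullet> x" using e2v ipb[OF x] lpos t by simp
      then show "e1 \<bullet> x \<le> 1" using e12[of x] effects_le[OF e x] by linarith
    qed
    have e2e: "e2 \<in> effects \<Omega>" unfolding effects_def
    proof (intro CollectI ballI conjI)
      fix x assume x: "x \<in> \<Omega>"
      show "0 \<le> e2 \<bullet> x" using e2v ipb[OF x] lpos t by simp
      have "0 \<le> e1 \<bullet> x" using e1v ipa[OF x] lpos t by simp
      then show "e2 \<bullet> x \<le> 1" using e12[of x] effects_le[OF e x] by linarith
    qed
    obtain c1 where c1: "e1 = c1 *\<^sub>R e" using ind e1e e2e esum unfolding indecomposable_def by blast
    obtain c2 where c2: "e2 = c2 *\<^sub>R e" using ind e1e e2e esum unfolding indecomposable_def by blast
    have "Qmat *v ((l * (1 - t)) *\<^sub>R a) = Qmat *v ((c1 * l) *\<^sub>R \<sigma>)"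
      using c1 unfolding e1_def eQ by (simp add: matrix_vector_mult_scaleR)
    then have a1: "(l * (1 - t)) *\<^sub>R a = (c1 * l) *\<^sub>R \<sigma>" by (rule Q_inj)
    have "l * (1 - t) * (u \<bullet> a) = c1 * l * (u \<bullet> \<sigma>)"
      using arg_cong[OF a1, of "\<lambda>v. u \<bullet> v"] by (simp only: inner_scaleR_right)
    then have eqc: "l * (1 - t) = c1 * l" using u1[OF a] u1[OF s] by (simp only: mult_1_right)
    have "(l * (1 - t)) *\<^sub>R a = (l * (1 - t)) *\<^sub>R \<sigma>" using a1 unfolding eqc[symmetric] .
    then have "a = \<sigma>" using lpos t by simp
    have "Qmat *v ((l * t) *\<^sub>R b) = Qmat *v ((c2 * l) *\<^sub>R \<sigma>)"
      using c2 unfolding e2_def eQ by (simp add: matrix_vector_mult_scaleR)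
    then have b1: "(l * t) *\<^sub>R b = (c2 * l) *\<^sub>R \<sigma>" by (rule Q_inj)
    have "l * t * (u \<bullet> b) = c2 * l * (u \<bullet> \<sigma>)"
      using arg_cong[OF b1, of "\<lambda>v. u \<bullet> v"] by (simp only: inner_scaleR_right)
    then have eqc: "l * t = c2 * l" using u1[OF b] u1[OF s] by (simp only: mult_1_right)
    have "(l * t) *\<^sub>R b = (l * t) *\<^sub>R \<sigma>" using b1 unfolding eqc[symmetric] .
    then have "b = \<sigma>" using lpos t by simp
    then show False using ab \<open>a = \<sigma>\<close> by simp
  qed
  have es: "e \<bullet> \<sigma> = l * rho" using ev[of \<sigma>] rho_ext[OF sext] by simp
  have lr1: "l * rho \<le> 1" using es effects_le[OF e s] by simp
  have "l * rho = 1"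
  proof (rule ccontr)
    assume "l * rho \<noteq> 1"
    then have lt: "l * rho < 1" using lr1 by simp
    have lrpos: "l * rho > 0" using lpos rho_pos by simp
    define e' where "e' = (1 / (l * rho)) *\<^sub>R e"
    have e'v: "e' \<bullet> x = ip \<sigma> x / rho" for x
      using lpos rho_pos by (simp add: e'_def ev ip_sym[of x])
    have e'e: "e' \<in> effects \<Omega>" unfolding effects_def
    proof (intro CollectI ballI conjI)
      fix x assume x: "x \<in> \<Omega>"
      show "0 \<le> e' \<bullet> x" using e'v Omega_ip_nonneg[OF s x] rho_pos by simp
      show "e' \<bullet> x \<le> 1" using e'v ext_bound[OF sext x] rho_pos by simp
    qed
    have z: "0 \<in> effects \<Omega>" by (simp add: effects_def)
    have e'nz: "0 \<noteq> e'" using enz lpos rho_pos by (simp add: e'_def)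
    have "(l * rho) *\<^sub>R e' = e" unfolding e'_def using lpos rho_pos by simp
    then have "e = (1 - l * rho) *\<^sub>R 0 + (l * rho) *\<^sub>R e'" by simp
    then have "e \<in> open_segment 0 e'" unfolding in_segment using e'nz lrpos lt by blast
    then show False using pe z e'e unfolding pure_effect_def extreme_point_of_def by blast
  qed
  then have "e \<bullet> \<sigma> = 1" using es by simp
  then show ?thesis using that l s He by blast
qed

definition "Pp g \<longleftrightarrow> g \<bullet> H g = u \<bullet> H g"

lemma sum_list_nonneg: "(\<forall>e\<in>set es. e \<in> effects \<Omega>) \<Longrightarrow> x \<in> \<Omega> \<Longrightarrow> sum_list es \<bullet> x \<ge> 0"
  by (induction es) (auto simp: inner_add_left effects_ge)

lemma swapH: "a \<bullet> H b = b \<bullet> H a"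
proof -
  have "a \<bullet> H b = ip (H b) (H a)" by (rule eval_H)
  also have "\<dots> = ip (H a) (H b)" by (rule ip_sym)
  also have "\<dots> = H a \<bullet> b" by (rule ip_H)
  also have "\<dots> = b \<bullet> H a" by (rule inner_commute)
  finally show ?thesis .
qed

lemma Pp_list:
  assumes "\<forall>e\<in>set es. e \<in> effects \<Omega> \<and> pure_effect \<Omega> e \<and> indecomposable \<Omega> e"
    and "sum_list es \<in> effects \<Omega>"
  shows "Pp (sum_list es)"
  using assms
proof (induction es)
  case Nil
  then show ?case by (simp add: Pp_def H_zero)
next
  case (Cons e es)
  define g' where "g' = sum_list es"
  have e: "e \<in> effects \<Omega>" "pure_effect \<Omega> e" "indecomposable \<Omega> e" using Cons.prems by auto
  have all: "\<forall>e\<in>set es. e \<in> effects \<Omega>" using Cons.prems by auto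
  have g'e: "g' \<in> effects \<Omega>" unfolding effects_def
  proof (intro CollectI ballI conjI)
    fix x assume x: "x \<in> \<Omega>"
    show "0 \<le> g' \<bullet> x" unfolding g'_def by (rule sum_list_nonneg[OF all x])
    have "(e + g') \<bullet> x \<le> 1" using Cons.prems(2) x by (simp add: effects_def g'_def)
    then show "g' \<bullet> x \<le> 1" using effects_ge[OF e(1) x] by (simp add: inner_add_left)
  qed
  have IH: "Pp g'" unfolding g'_def using Cons.IH Cons.prems g'e g'_def by simp
  obtain l \<sigma> where l: "l \<ge> 0" and s: "\<sigma> \<in> \<Omega>" and He: "H e = l *\<^sub>R \<sigma>" and es: "e \<bullet> \<sigma> = 1"
    using pure_key[OF e] by blast
  have "(e + g') \<bullet> \<sigma> \<le> 1" using Cons.prems(2) s by (simp add: effects_def g'_def)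
  then have g's: "g' \<bullet> \<sigma> = 0" using es effects_ge[OF g'e s] by (simp add: inner_add_left)
  have x1: "(e + g') \<bullet> H (e + g') = e \<bullet> H e + e \<bullet> H g' + g' \<bullet> H e + g' \<bullet> H g'"
    by (simp add: H_add inner_add_left inner_add_right)
  have x2: "e \<bullet> H g' = g' \<bullet> H e"
    by (rule swapH)
  have x3: "g' \<bullet> H e = 0" using g's by (simp add: He)
  have x4: "e \<bullet> H e = u \<bullet> H e" using es u1[OF s] by (simp add: He)
  have x5: "g' \<bullet> H g' = u \<bullet> H g'" using IH by (simp add: Pp_def)
  have x6: "u \<bullet> H (e + g') = u \<bullet> H e + u \<bullet> H g'" by (simp add: H_add inner_add_right)
  have "(e + g') \<bullet> H (e + g') = u \<bullet> H (e + g')"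
    unfolding x1 x6 x2 x3 x4 x5 by simp
  then show ?case by (simp add: Pp_def g'_def)
qed

lemma Pp_compl: "Pp g \<Longrightarrow> Pp (u - g)"
proof -
  assume P: "Pp g"
  have sw: "g \<bullet> H u = u \<bullet> H g"
    by (rule swapH)
  have y1: "(u - g) \<bullet> H (u - g) = u \<bullet> H u - u \<bullet> H g - g \<bullet> H u + g \<bullet> H g"
    by (simp add: H_diff inner_diff_left inner_diff_right)
  have y2: "u \<bullet> H (u - g) = u \<bullet> H u - u \<bullet> H g" by (simp add: H_diff inner_diff_right)
  have "(u - g) \<bullet> H (u - g) = u \<bullet> H (u - g)" unfolding y1 y2 sw using P by (simp add: Pp_def)
  then show ?thesis by (simp add: Pp_def)
qed

lemma ideal_Pp:
  assumes "ideal_observable \<Omega> u X f" "a \<in> X" shows "Pp (f a)"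
proof -
  have fe: "f a \<in> effects \<Omega>" using assms by (simp add: ideal_observable_def observable_def)
  obtain es where es: "\<forall>e\<in>set es. e \<in> effects \<Omega> \<and> pure_effect \<Omega> e \<and> indecomposable \<Omega> e"
    and eq: "f a = sum_list es \<or> f a = u - sum_list es"
    using assms unfolding ideal_observable_def by blast
  show ?thesis
  proof (cases "f a = sum_list es")
    case True
    then show ?thesis using Pp_list[OF es] fe by simp
  next
    case False
    then have fu: "f a = u - sum_list es" using eq by simp
    have "sum_list es \<in> effects \<Omega>" unfolding effects_def
    proof (intro CollectI ballI conjI)
      fix x assume x: "x \<in> \<Omega>"
      have "(u - sum_list es) \<bullet> x \<ge> 0" "(u - sum_list es) \<bullet> x \<le> 1"
        using fe x fu by (auto simp: effects_def)
      then show "0 \<le> sum_list es \<bullet> x" "sum_list es \<bullet> x \<le> 1" using u1[OF x] by (auto simp: inner_diff_left)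
    qed
    then show ?thesis using Pp_compl[OF Pp_list[OF es]] fu by simp
  qed
qed

end

context gpt2 begin

lemma D_inf_ge:
  assumes X: "finite X" "a \<in> X" and w: "w \<in> \<Omega>"
  shows "\<bar>ft a \<bullet> w - f a \<bullet> w\<bar> \<le> D_inf \<Omega> X ft f"
proof -
  obtain r where r: "\<And>w. w \<in> \<Omega> \<Longrightarrow> norm w \<le> r" using Omega_bounded by blast
  have r0: "r \<ge> 0" using r[OF w] norm_ge_zero order_trans by blast
  define C where "C = (\<Sum>x\<in>X. norm (ft x - f x) * r)"
  have el: "\<bar>ft x \<bullet> v - f x \<bullet> v\<bar> \<le> C" if "x \<in> X" "v \<in> \<Omega>" for x v
  proof -
    have "\<bar>ft x \<bullet> v - f x \<bullet> v\<bar> = \<bar>(ft x - f x) \<bullet> v\<bar>" by (simp add: inner_diff_left)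
    also have "\<dots> \<le> norm (ft x - f x) * norm v" by (rule Cauchy_Schwarz_ineq2)
    also have "\<dots> \<le> norm (ft x - f x) * r" using r[OF that(2)] by (simp add: mult_left_mono)
    also have "\<dots> \<le> C" unfolding C_def
      by (rule member_le_sum[OF that(1)]) (use r0 X in auto)
    finally show ?thesis .
  qed
  have bdd: "bdd_above ((\<lambda>v. Max ((\<lambda>x. \<bar>ft x \<bullet> v - f x \<bullet> v\<bar>) ` X)) ` \<Omega>)"
  proof (rule bdd_aboveI2)
    fix v assume "v \<in> \<Omega>"
    then show "Max ((\<lambda>x. \<bar>ft x \<bullet> v - f x \<bullet> v\<bar>) ` X) \<le> C"
      using X el by (subst Max_le_iff) auto
  qed
  have "\<bar>ft a \<bullet> w - f a \<bullet> w\<bar> \<le> Max ((\<lambda>x. \<bar>ft x \<bullet> w - f x \<bullet> w\<bar>) ` X)"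
    using X by (intro Max_ge) auto
  also have "\<dots> \<le> D_inf \<Omega> X ft f" unfolding D_inf_def
    by (rule cSUP_upper[OF w bdd])
  finally show ?thesis .
qed

lemma LE_le: "finite X \<Longrightarrow> a \<in> X \<Longrightarrow> LE X f w \<le> 1 - f a \<bullet> w"
  unfolding LE_def by (simp add: Max_ge)

lemma H_nz: "e \<noteq> 0 \<Longrightarrow> H e \<noteq> 0" using QH[of e] by auto

lemma marg_bound:
  assumes idl: "ideal_observable \<Omega> u X f" and X: "finite X"
    and mF: "\<And>a. a \<in> X \<Longrightarrow> mF a \<in> effects \<Omega>"
    and eps: "\<And>a w. a \<in> X \<Longrightarrow> w \<in> \<Omega> \<Longrightarrow> f a \<bullet> w - mF a \<bullet> w \<le> \<epsilon>"
  shows "(\<Sum>a\<in>X. f a \<bullet> H (mF a)) \<ge> (1 - \<epsilon>) * (u \<bullet> H u)"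
proof -
  have fe: "f a \<in> effects \<Omega>" if "a \<in> X" for a using idl that by (simp add: ideal_observable_def observable_def)
  have su: "(\<Sum>a\<in>X. f a) = u" using idl by (simp add: ideal_observable_def observable_def)
  have each: "f a \<bullet> H (mF a) \<ge> (1 - \<epsilon>) * (u \<bullet> H (f a))" if a: "a \<in> X" for a
  proof -
    obtain s \<sigma> where s: "s \<ge> 0" "\<sigma> \<in> \<Omega>" "H (f a) = s *\<^sub>R \<sigma>" using effect_H_obtain[OF fe[OF a]] by blast
    have P: "f a \<bullet> H (f a) = u \<bullet> H (f a)" using ideal_Pp[OF idl a] by (simp add: Pp_def)
    have uH: "u \<bullet> H (f a) = s" using s u1[OF s(2)] by simp
    have fH: "s * (f a \<bullet> \<sigma>) = s" using P uH s(3) u1[OF s(2)] by auto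
    have "f a \<bullet> H (mF a) = mF a \<bullet> H (f a)" by (rule swapH)
    also have "\<dots> = s * (mF a \<bullet> \<sigma>)" using s by simp
    also have "\<dots> \<ge> s * (f a \<bullet> \<sigma> - \<epsilon>)" using eps[OF a s(2)] s(1) by (intro mult_left_mono) auto
    also have "s * (f a \<bullet> \<sigma> - \<epsilon>) = (1 - \<epsilon>) * s" using fH by (simp add: algebra_simps)
    finally show ?thesis using uH by (simp add: mult.commute)
  qed
  have "(1 - \<epsilon>) * (u \<bullet> H u) = (\<Sum>a\<in>X. (1 - \<epsilon>) * (u \<bullet> H (f a)))"
    by (simp add: su[symmetric] H_sum inner_sum_right sum_distrib_left)
  also have "\<dots> \<le> (\<Sum>a\<in>X. f a \<bullet> H (mF a))" by (rule sum_mono) (rule each)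
  finally show ?thesis .
qed

end

context gpt2 begin

lemma main:
  fixes A :: "'p set" and B :: "'q set"
  assumes idf: "ideal_observable \<Omega> u A f" and idg: "ideal_observable \<Omega> u B g"
    and obs: "observable \<Omega> u (A \<times> B) m"
  shows "\<exists>w\<in>\<Omega>. D_inf \<Omega> A (\<lambda>a. \<Sum>b\<in>B. m (a, b)) f + D_inf \<Omega> B (\<lambda>b. \<Sum>a\<in>A. m (a, b)) g
                \<ge> LE A f w + LE B g w"
proof -
  define mF where "mF = (\<lambda>a. \<Sum>b\<in>B. m (a, b))"
  define mG where "mG = (\<lambda>b. \<Sum>a\<in>A. m (a, b))"
  define eF where "eF = D_inf \<Omega> A mF f"
  define eG where "eG = D_inf \<Omega> B mG g"
  have finA: "finite A" using idf by (simp add: ideal_observable_def observable_def)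
  have finB: "finite B" using idg by (simp add: ideal_observable_def observable_def)
  have finAB: "finite (A \<times> B)" using finA finB by simp
  have me: "m x \<in> effects \<Omega>" if "x \<in> A \<times> B" for x using obs that unfolding observable_def by blast
  have msum: "(\<Sum>x\<in>A \<times> B. m x) = u" using obs by (simp add: observable_def)
  have sum_nonneg_eff: "\<And>X h w. finite X \<Longrightarrow> (\<And>x. x \<in> X \<Longrightarrow> h x \<in> effects \<Omega>) \<Longrightarrow> w \<in> \<Omega> \<Longrightarrow> (\<Sum>x\<in>X. h x) \<bullet> w \<ge> 0"
    by (simp add: inner_sum_left sum_nonneg effects_ge)
  have u_eff: "(\<Sum>x\<in>A \<times> B. m x) \<bullet> w \<le> 1" if "w \<in> \<Omega>" for w using msum u1[OF that] by simp
  have mFe: "mF a \<in> effects \<Omega>" if a: "a \<in> A" for a unfolding effects_def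
  proof (intro CollectI ballI conjI)
    fix w assume w: "w \<in> \<Omega>"
    show "0 \<le> mF a \<bullet> w" unfolding mF_def using finB a me w by (intro sum_nonneg_eff) auto
    have "{a} \<times> B = (\<lambda>b. (a, b)) ` B" by auto
    then have "(\<Sum>x\<in>{a} \<times> B. m x \<bullet> w) = (\<Sum>b\<in>B. m (a, b) \<bullet> w)"
      by (simp add: sum.reindex inj_on_def)
    then have "mF a \<bullet> w = (\<Sum>x\<in>{a} \<times> B. m x \<bullet> w)" unfolding mF_def by (simp add: inner_sum_left)
    also have "\<dots> \<le> (\<Sum>x\<in>A \<times> B. m x \<bullet> w)"
      using a finAB me w by (intro sum_mono2) (auto simp: effects_ge)
    also have "\<dots> \<le> 1" using u_eff[OF w] by (simp add: inner_sum_left)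
    finally show "mF a \<bullet> w \<le> 1" .
  qed
  have mGe: "mG b \<in> effects \<Omega>" if b: "b \<in> B" for b unfolding effects_def
  proof (intro CollectI ballI conjI)
    fix w assume w: "w \<in> \<Omega>"
    show "0 \<le> mG b \<bullet> w" unfolding mG_def using finA b me w by (intro sum_nonneg_eff) auto
    have "A \<times> {b} = (\<lambda>a. (a, b)) ` A" by auto
    then have "(\<Sum>x\<in>A \<times> {b}. m x \<bullet> w) = (\<Sum>a\<in>A. m (a, b) \<bullet> w)"
      by (simp add: sum.reindex inj_on_def)
    then have "mG b \<bullet> w = (\<Sum>x\<in>A \<times> {b}. m x \<bullet> w)" unfolding mG_def by (simp add: inner_sum_left)
    also have "\<dots> \<le> (\<Sum>x\<in>A \<times> B. m x \<bullet> w)"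
      using b finAB me w by (intro sum_mono2) (auto simp: effects_ge)
    also have "\<dots> \<le> 1" using u_eff[OF w] by (simp add: inner_sum_left)
    finally show "mG b \<bullet> w \<le> 1" .
  qed
  have bF: "(\<Sum>a\<in>A. f a \<bullet> H (mF a)) \<ge> (1 - eF) * (u \<bullet> H u)"
  proof (rule marg_bound[OF idf finA mFe])
    fix a w assume "a \<in> A" "w \<in> \<Omega>"
    then have "\<bar>mF a \<bullet> w - f a \<bullet> w\<bar> \<le> eF" unfolding eF_def by (rule D_inf_ge[OF finA])
    then show "f a \<bullet> w - mF a \<bullet> w \<le> eF" by linarith
  qed
  have bG: "(\<Sum>b\<in>B. g b \<bullet> H (mG b)) \<ge> (1 - eG) * (u \<bullet> H u)"
  proof (rule marg_bound[OF idg finB mGe])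
    fix b w assume "b \<in> B" "w \<in> \<Omega>"
    then have "\<bar>mG b \<bullet> w - g b \<bullet> w\<bar> \<le> eG" unfolding eG_def by (rule D_inf_ge[OF finB])
    then show "g b \<bullet> w - mG b \<bullet> w \<le> eG" by linarith
  qed
  have sF: "(\<Sum>a\<in>A. f a \<bullet> H (mF a)) = (\<Sum>x\<in>A \<times> B. f (fst x) \<bullet> H (m x))"
    unfolding mF_def by (simp add: H_sum inner_sum_right sum.cartesian_product case_prod_unfold)
  have sG: "(\<Sum>b\<in>B. g b \<bullet> H (mG b)) = (\<Sum>x\<in>A \<times> B. g (snd x) \<bullet> H (m x))"
  proof -
    have "(\<Sum>b\<in>B. g b \<bullet> H (mG b)) = (\<Sum>b\<in>B. \<Sum>a\<in>A. g b \<bullet> H (m (a,b)))"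
      unfolding mG_def by (simp add: H_sum inner_sum_right)
    also have "\<dots> = (\<Sum>a\<in>A. \<Sum>b\<in>B. g b \<bullet> H (m (a,b)))" by (rule sum.swap)
    also have "\<dots> = (\<Sum>x\<in>A \<times> B. g (snd x) \<bullet> H (m x))" by (simp add: sum.cartesian_product case_prod_unfold)
    finally show ?thesis .
  qed
  have sU: "u \<bullet> H u = (\<Sum>x\<in>A \<times> B. u \<bullet> H (m x))"
    by (simp add: msum[symmetric] H_sum inner_sum_right)
  have Spos: "u \<bullet> H u > 0"
  proof -
    obtain w where "w \<in> \<Omega>" using Omega_ne by blast
    then have "u \<noteq> 0" using u1 by fastforce
    then have "ip (H u) (H u) > 0" using H_nz ip_pos by blast
    then show ?thesis by (simp add: eval_H)
  qed
  have "\<forall>x\<in>A \<times> B. \<exists>t w. t \<ge> 0 \<and> w \<in> \<Omega> \<and> H (m x) = t *\<^sub>R w"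
    using effect_H_obtain me by metis
  then obtain t wx where tw: "\<And>x. x \<in> A \<times> B \<Longrightarrow> t x \<ge> 0 \<and> wx x \<in> \<Omega> \<and> H (m x) = t x *\<^sub>R wx x"
    by metis
  define c where "c = 2 - eF - eG"
  define val where "val = (\<lambda>x. (f (fst x) + g (snd x)) \<bullet> wx x)"
  have key: "(\<Sum>x\<in>A \<times> B. t x * val x) \<ge> c * (\<Sum>x\<in>A \<times> B. t x)"
  proof -
    have "(\<Sum>x\<in>A \<times> B. t x * val x) = (\<Sum>x\<in>A \<times> B. f (fst x) \<bullet> H (m x)) + (\<Sum>x\<in>A \<times> B. g (snd x) \<bullet> H (m x))"
      unfolding val_def sum.distrib[symmetric] by (intro sum.cong refl) (simp add: tw inner_add_left algebra_simps)
    also have "(\<Sum>x\<in>A \<times> B. t x) = u \<bullet> H u" unfolding sU by (intro sum.cong refl) (simp add: tw u1)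
    moreover note bF bG sF sG
    ultimately show ?thesis unfolding c_def by (simp add: algebra_simps)
  qed
  have tpos: "\<exists>x\<in>A \<times> B. t x > 0"
  proof (rule ccontr)
    assume "\<not> ?thesis"
    then have "(\<Sum>x\<in>A \<times> B. t x) \<le> 0" by (intro sum_nonpos) (auto simp: not_less)
    moreover have "(\<Sum>x\<in>A \<times> B. t x) = u \<bullet> H u" unfolding sU by (intro sum.cong refl) (simp add: tw u1)
    ultimately show False using Spos by simp
  qed
  have "\<exists>x\<in>A \<times> B. t x > 0 \<and> val x \<ge> c"
  proof (rule ccontr)
    assume "\<not> ?thesis"
    then have neg: "\<And>x. x \<in> A \<times> B \<Longrightarrow> t x > 0 \<Longrightarrow> val x < c" by (auto simp: not_le)
    obtain x0 where x0: "x0 \<in> A \<times> B" "t x0 > 0" using tpos by blast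
    have "0 < (\<Sum>x\<in>A \<times> B. t x * (c - val x))"
    proof (rule sum_pos2[OF finAB x0(1)])
      show "0 < t x0 * (c - val x0)" using neg[OF x0] x0(2) by simp
      fix x assume x: "x \<in> A \<times> B"
      show "0 \<le> t x * (c - val x)"
      proof (cases "t x > 0")
        case True then show ?thesis using neg[OF x] by simp
      next
        case False then have "t x = 0" using tw[OF x] by simp
        then show ?thesis by simp
      qed
    qed
    also have "\<dots> = c * (\<Sum>x\<in>A \<times> B. t x) - (\<Sum>x\<in>A \<times> B. t x * val x)"
      by (simp add: algebra_simps sum_subtractf sum_distrib_left)
    finally show False using key by simp
  qed
  then obtain x where x: "x \<in> A \<times> B" "val x \<ge> c" by blast
  have w: "wx x \<in> \<Omega>" using tw[OF x(1)] by simp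
  have "LE A f (wx x) + LE B g (wx x) \<le> (1 - f (fst x) \<bullet> wx x) + (1 - g (snd x) \<bullet> wx x)"
    using LE_le[OF finA, of "fst x" f "wx x"] LE_le[OF finB, of "snd x" g "wx x"] x(1)
    by (intro add_mono) (auto simp: mem_Times_iff)
  also have "\<dots> = 2 - val x" unfolding val_def by (simp add: inner_add_left)
  also have "\<dots> \<le> eF + eG" using x(2) unfolding c_def by simp
  finally show ?thesis using w unfolding eF_def eG_def mF_def mG_def by blast
qed

end

theorem theorem3p2:
  fixes \<Omega> :: "(real^'n) set" and u :: "real^'n" and M :: "(real^'n^'n) measure"
    and A :: "'a set" and B :: "'b set"
    and f :: "'a \<Rightarrow> real^'n" and g :: "'b \<Rightarrow> real^'n"
    and m :: "'a \<times> 'b \<Rightarrow> real^'n"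
  assumes "state_space \<Omega>" and "unit_effect \<Omega> u"
    and "transitive_ss \<Omega>"
    and "haar_GL \<Omega> M" and "self_dual_wrt \<Omega> (GL_inner M)"
    and "ideal_observable \<Omega> u A f" and "ideal_observable \<Omega> u B g"
    and "observable \<Omega> u (A \<times> B) m"
  shows "\<exists>w\<in>\<Omega>. D_inf \<Omega> A (\<lambda>a. \<Sum>b\<in>B. m (a, b)) f + D_inf \<Omega> B (\<lambda>b. \<Sum>a\<in>A. m (a, b)) g
                \<ge> LE A f w + LE B g w"
proof -
  interpret gpt2 \<Omega> u M
    using assms(1-5) by (simp add: gpt2_def gpt_def gpt2_axioms_def)
  show ?thesis by (rule main[OF assms(6-8)])
qed

end
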